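(* For every positive integer $n\neq 2$, there is no continuous bijection from $\mathbb{R}^n$ onto $\mathbb{R}^2$.
   Context: $\mathbb{R}^n$ and $\mathbb{R}^2$ carry their usual Euclidean topologies. *)

theory Defs
  imports "HOL-Analysis.Analysis"
begin

end

theory Submission
  imports Defs
begin

lemma no_interior:
  fixes f :: "real ^ 'n \<Rightarrow> real ^ 2"
  assumes "CARD('n) = 1" "continuous_on UNIV f" "inj f"
  shows "interior (f ` cball 0 k) = {}"
proof (rule ccontr)
  assume "interior (f ` cball 0 k) \<noteq> {}"
  then obtain x where "x \<in> interior (f ` cball 0 k)" by blast
  then obtain e where e: "e > 0" "ball x e \<subseteq> f ` cball 0 k"
    by (meson mem_interior)
  define g where "g = the_inv_into (cball 0 k) f"
  have cg: "continuous_on (f ` cball 0 k) g"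
    unfolding g_def
    by (rule continuous_on_inv_into) (auto intro: continuous_on_subset[OF assms(2)] inj_on_subset[OF assms(3)])
  have "inj_on g (f ` cball 0 k)" unfolding g_def by (rule inj_on_the_inv_into) (rule inj_on_subset[OF assms(3)], simp)
  hence ij: "inj_on g (ball x e)" using e inj_on_subset by blast
  have cg2: "continuous_on (ball x e) g" using cg e(2) continuous_on_subset by blast
  have "dim (UNIV :: (real^2) set) \<le> dim (UNIV :: (real^'n) set)"
    using invariance_of_dimension_subspaces[where S="ball x e" and U=UNIV and V=UNIV and f=g] cg2 ij e(1) by simp
  then show False using assms(1) by simp
qed

theorem theorem4:
  fixes f :: "real ^ 'n \<Rightarrow> real ^ 2"
  assumes "CARD('n) \<noteq> 2"
  shows "\<not> (continuous_on UNIV f \<and> bij f)"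
proof
  assume H: "continuous_on UNIV f \<and> bij f"
  hence cf: "continuous_on UNIV f" and inj: "inj f" and surj: "surj f"
    by (auto simp: bij_def)
  have "CARD('n) > 0" by simp
  then consider "CARD('n) = 1" | "CARD('n) \<ge> 3" using assms by linarith
  then show False
  proof cases
    case 2
    have "dim (UNIV :: (real^'n) set) \<le> dim (UNIV :: (real^2) set)"
      by (rule continuous_injective_image_subspace_dim_le) (use cf inj in auto)
    then show False using 2 by simp
  next
    case 1
    define G where "G = range (\<lambda>k::nat. - (f ` cball 0 (real k)))"
    have "UNIV \<subseteq> closure (\<Inter>G)"
    proof (rule Baire)
      show "countable G" unfolding G_def by simp
      fix T assume "T \<in> G"
      then obtain k::nat where T: "T = - (f ` cball 0 (real k))" unfolding G_def by auto
      have cpt: "compact (f ` cball 0 (real k))"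
        by (rule compact_continuous_image) (auto intro: continuous_on_subset[OF cf])
      have "open T" unfolding T using cpt by (simp add: compact_imp_closed open_Compl)
      moreover have "closure T = UNIV"
        unfolding T closure_interior using no_interior[OF 1 cf inj] by simp
      ultimately show "openin (top_of_set UNIV) T \<and> UNIV \<subseteq> closure T" by simp
    qed simp
    moreover have "\<Inter>G = {}"
    proof -
      have "(\<Union>k::nat. f ` cball 0 (real k)) = UNIV"
      proof
        show "UNIV \<subseteq> (\<Union>k::nat. f ` cball 0 (real k))"
        proof
          fix y :: "real^2"
          obtain x where "y = f x" using surj by blast
          obtain k::nat where "norm x \<le> real k" using real_arch_simple by blast
          then have "x \<in> cball 0 (real k)" by simp
          then show "y \<in> (\<Union>k::nat. f ` cball 0 (real k))" using \<open>y = f x\<close> by blast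
        qed
      qed auto
      then show ?thesis unfolding G_def by auto
    qed
    ultimately show False by simp
  qed
qed

end
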